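(* Let $(X,\preceq,\{H_n\})$ be a half-space order such that $(X,\preceq)$ is globally hyperbolic with respect to a given topology on $X$. Let $H$ be a group acting effectively and unboundedly by quasi-automorphisms on $(X,\preceq,\{H_n\})$, and let $T_X:H\to\mathbb{R}$ be the associated translation number. Then for every subgroup $G<H$ the following are equivalent: (i) $T_X|_G\equiv 0$; (ii) every $G$-orbit in $X$ is bounded; (iii) there exists a bounded $G$-orbit in $X$.
   Context: A half-space filtration of $X$ is $\{H_n\}_{n\in\mathbb{Z}}$ with $H_{n+1}\subsetneq H_n$, $\bigcap H_n=\emptyset$, $\bigcup H_n=X$; height $h(a)=\sup\{n: a\in H_n\}$, $h(a,b)=h(a)-h(b)$. A half-space order $(X,\preceq,\{H_n\})$: $(X,\preceq)$ a poset, $\{H_n\}$ a half-space filtration and for a constant $w$, $h(a,b)\geq w\Rightarrow a\succeq b$. An action is by quasi-automorphisms if for some $d$, $|h(ga,gb)-h(a,b)|\leq d$ for all $g,a,b$; unbounded if for some $g,a$, $h(g^na)\to\pm\infty$ as $n\to\pm\infty$. The translation number is $T_X(g)=\lim_{n\to\infty}h(g^na,a)/n$ (independent of $a$). $(X,\preceq)$ is globally hyperbolic if the intervals $[x,y]=\{z:x\preceq z\preceq y\}$ are compact and the sets $[x,\infty)=\{z: x\preceq z\}$, $(-\infty,x]=\{z:z\preceq x\}$ are closed. A subset of $X$ is bounded if its closure is compact. *)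

theory Defs
  imports "HOL-Analysis.Analysis" "HOL-Algebra.Group_Action"
begin

definition half_space_filtration :: "(int \<Rightarrow> 'x set) \<Rightarrow> bool" where
  "half_space_filtration H \<longleftrightarrow>
     (\<forall>n. H (n + 1) \<subset> H n) \<and> (\<Inter>n. H n) = {} \<and> (\<Union>n. H n) = UNIV"

definition height :: "(int \<Rightarrow> 'x set) \<Rightarrow> 'x \<Rightarrow> int" where
  "height H a = Sup {n. a \<in> H n}"

definition rel_height :: "(int \<Rightarrow> 'x set) \<Rightarrow> 'x \<Rightarrow> 'x \<Rightarrow> int" where
  "rel_height H a b = height H a - height H b"

definition is_poset :: "('x \<Rightarrow> 'x \<Rightarrow> bool) \<Rightarrow> bool" where
  "is_poset leq \<longleftrightarrow> partial_order_on UNIV {(a, b). leq a b}"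

definition half_space_order :: "('x \<Rightarrow> 'x \<Rightarrow> bool) \<Rightarrow> (int \<Rightarrow> 'x set) \<Rightarrow> bool" where
  "half_space_order leq H \<longleftrightarrow> is_poset leq \<and> half_space_filtration H \<and>
     (\<exists>w::int. \<forall>a b. rel_height H a b \<ge> w \<longrightarrow> leq b a)"

definition globally_hyperbolic :: "('x::topological_space \<Rightarrow> 'x \<Rightarrow> bool) \<Rightarrow> bool" where
  "globally_hyperbolic leq \<longleftrightarrow>
     (\<forall>x y. compact {z. leq x z \<and> leq z y}) \<and>
     (\<forall>x. closed {z. leq x z}) \<and> (\<forall>x. closed {z. leq z x})"

definition top_bounded :: "'x::topological_space set \<Rightarrow> bool" where
  "top_bounded S \<longleftrightarrow> compact (closure S)"

definition quasi_aut_action ::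
    "('g, 'b) monoid_scheme \<Rightarrow> ('g \<Rightarrow> 'x \<Rightarrow> 'x) \<Rightarrow> (int \<Rightarrow> 'x set) \<Rightarrow> bool" where
  "quasi_aut_action G \<phi> H \<longleftrightarrow>
     (\<exists>d::int. \<forall>g \<in> carrier G. \<forall>a b.
        \<bar>rel_height H (\<phi> g a) (\<phi> g b) - rel_height H a b\<bar> \<le> d)"

definition unbounded_action ::
    "('g, 'b) monoid_scheme \<Rightarrow> ('g \<Rightarrow> 'x \<Rightarrow> 'x) \<Rightarrow> (int \<Rightarrow> 'x set) \<Rightarrow> bool" where
  "unbounded_action G \<phi> H \<longleftrightarrow>
     (\<exists>g \<in> carrier G. \<exists>a.
        filterlim (\<lambda>n::int. height H (\<phi> (g [^]\<^bsub>G\<^esub> n) a)) at_top at_top \<and>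
        filterlim (\<lambda>n::int. height H (\<phi> (g [^]\<^bsub>G\<^esub> n) a)) at_bot at_bot)"

text \<open>Translation number, computed at a fixed base point (it is independent of it).\<close>
definition translation_number ::
    "('g, 'b) monoid_scheme \<Rightarrow> ('g \<Rightarrow> 'x \<Rightarrow> 'x) \<Rightarrow> (int \<Rightarrow> 'x set) \<Rightarrow> 'g \<Rightarrow> real" where
  "translation_number G \<phi> H g =
     (let a = (SOME a::'x. True) in
      lim (\<lambda>n::nat. real_of_int (rel_height H (\<phi> (g [^]\<^bsub>G\<^esub> n) a) a) / real n))"

end

theory Submission
  imports Defs
begin

lemma hsf_mono:
  assumes "half_space_filtration H" "n \<le> m" shows "H m \<subseteq> H n"
proof -
  obtain k where k: "m = n + int k" using assms(2) by (metis zle_iff_zadd)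
  have "H (n + int k) \<subseteq> H n"
  proof (induction k)
    case 0 show ?case by simp
  next
    case (Suc k)
    have "H (n + int k + 1) \<subseteq> H (n + int k)" using assms(1) unfolding half_space_filtration_def
      by blast
    hence "H (n + int (Suc k)) \<subseteq> H (n + int k)" by (simp add: ac_simps)
    with Suc show ?case by blast
  qed
  thus ?thesis using k by simp
qed

lemma height_iff:
  assumes "half_space_filtration H" shows "a \<in> H n \<longleftrightarrow> n \<le> height H a"
proof -
  let ?S = "{n. a \<in> H n}"
  have ne: "?S \<noteq> {}" using assms unfolding half_space_filtration_def by blast
  obtain N where N: "a \<notin> H N" using assms unfolding half_space_filtration_def by blast
  have ub: "n < N" if "n \<in> ?S" for n
  proof (rule ccontr)
    assume "\<not> n < N"
    then show False using hsf_mono[OF assms, of N n] N that by auto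
  qed
  hence bdd: "bdd_above ?S" by (meson bdd_above.I less_imp_le)
  show ?thesis
  proof
    assume "a \<in> H n" thus "n \<le> height H a" unfolding height_def using bdd by (simp add: cSup_upper)
  next
    assume h: "n \<le> height H a"
    show "a \<in> H n"
    proof (rule ccontr)
      assume na: "a \<notin> H n"
      have "m \<le> n - 1" if "m \<in> ?S" for m
      proof (rule ccontr)
        assume "\<not> m \<le> n - 1"
        then show False using hsf_mono[OF assms, of n m] na that by auto
      qed
      hence "height H a \<le> n - 1" unfolding height_def using ne by (meson cSup_least)
      with h show False by simp
    qed
  qed
qed

lemma height_exists:
  assumes "half_space_filtration H" shows "\<exists>a. height H a = n"
proof -
  have "H (n+1) \<subset> H n" using assms unfolding half_space_filtration_def by blast
  then obtain a where "a \<in> H n" "a \<notin> H (n+1)" by blast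
  hence "n \<le> height H a" "\<not> n + 1 \<le> height H a" using height_iff[OF assms] by blast+
  thus ?thesis by (intro exI[of _ a]) linarith
qed


lemma quasi_conv:
  fixes u :: "nat \<Rightarrow> real"
  assumes A: "\<And>n m. \<bar>u (n*m) - real m * u n\<bar> \<le> real m * d"
  shows "convergent (\<lambda>n. u n / real n) \<and> \<bar>lim (\<lambda>n. u n / real n) - u 1\<bar> \<le> d"
proof -
  have d0: "0 \<le> d" using A[of 1 1] by simp
  have B: "\<bar>u (n*m) / real (n*m) - u n / real n\<bar> \<le> d / real n" if "n \<ge> 1" "m \<ge> 1" for n m
  proof -
    have "u (n*m) / real (n*m) - u n / real n = (u (n*m) - real m * u n) / real (n*m)"
      using that by (simp add: field_simps)
    hence "\<bar>u (n*m) / real (n*m) - u n / real n\<bar> = \<bar>u (n*m) - real m * u n\<bar> / real (n*m)"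
      by simp
    also have "\<dots> \<le> real m * d / real (n*m)" using A[of n m] that by (intro divide_right_mono) auto
    also have "\<dots> = d / real n" using that by simp
    finally show ?thesis .
  qed
  have C: "\<bar>u n / real n - u m / real m\<bar> \<le> d / real n + d / real m" if "n \<ge> 1" "m \<ge> 1" for n m
  proof -
    have 1: "\<bar>u (n*m) / real (n*m) - u n / real n\<bar> \<le> d / real n" using B that by blast
    have 2: "\<bar>u (n*m) / real (n*m) - u m / real m\<bar> \<le> d / real m"
      using B[of m n] that by (simp add: mult.commute)
    show ?thesis using 1 2 unfolding abs_le_iff by linarith
  qed
  have "Cauchy (\<lambda>n. u n / real n)"
  proof (rule CauchyI)
    fix e :: real assume e: "0 < e"
    define M :: nat where "M = nat \<lceil>2 * d / e\<rceil> + 1"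
    have M1: "M \<ge> 1" unfolding M_def by simp
    have "2 * d / e < real M" unfolding M_def by linarith
    hence Me: "2 * d / real M < e" using e M1 by (simp add: field_simps)
    have "\<forall>m\<ge>M. \<forall>n\<ge>M. norm (u m / real m - u n / real n) < e"
    proof (intro allI impI)
      fix m n assume mn: "m \<ge> M" "n \<ge> M"
      have "d / real m \<le> d / real M" using mn M1 d0 by (intro divide_left_mono) auto
      moreover have "d / real n \<le> d / real M" using mn M1 d0 by (intro divide_left_mono) auto
      ultimately show "norm (u m / real m - u n / real n) < e"
        using C[of m n] mn M1 Me by simp
    qed
    thus "\<exists>M. \<forall>m\<ge>M. \<forall>n\<ge>M. norm (u m / real m - u n / real n) < e" by blast
  qed
  hence cv: "convergent (\<lambda>n. u n / real n)" by (simp add: Cauchy_convergent_iff)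
  hence L: "(\<lambda>n. u n / real n) \<longlonglongrightarrow> lim (\<lambda>n. u n / real n)" by (simp add: convergent_LIMSEQ_iff)
  have "(\<lambda>n. \<bar>u n / real n - u 1\<bar>) \<longlonglongrightarrow> \<bar>lim (\<lambda>n. u n / real n) - u 1\<bar>"
    by (intro tendsto_intros L)
  moreover have "\<forall>n\<ge>1. \<bar>u n / real n - u 1\<bar> \<le> d"
    using B[of 1] by simp
  ultimately have "\<bar>lim (\<lambda>n. u n / real n) - u 1\<bar> \<le> d" by (rule Lim_bounded)
  with cv show ?thesis by blast
qed


lemma poset_antisym: "is_poset leq \<Longrightarrow> leq a b \<Longrightarrow> leq b a \<Longrightarrow> a = b"
  by (auto simp: is_poset_def partial_order_on_def antisym_def)

lemma qm_step:
  assumes ga: "group_action Gr UNIV \<phi>"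
    and qd: "\<forall>g \<in> carrier Gr. \<forall>a b. \<bar>rel_height H (\<phi> g a) (\<phi> g b) - rel_height H a b\<bar> \<le> d"
    and x: "x \<in> carrier Gr" and y: "y \<in> carrier Gr"
  shows "\<bar>rel_height H (\<phi> (y \<otimes>\<^bsub>Gr\<^esub> x) a) a - rel_height H (\<phi> y a) a - rel_height H (\<phi> x a) a\<bar> \<le> d"
proof -
  have c: "\<phi> (y \<otimes>\<^bsub>Gr\<^esub> x) a = \<phi> y (\<phi> x a)"
    using group_action.composition_rule[OF ga, of a y x] x y by simp
  have "\<bar>rel_height H (\<phi> y (\<phi> x a)) (\<phi> y a) - rel_height H (\<phi> x a) a\<bar> \<le> d"
    using qd y by blast
  thus ?thesis unfolding c rel_height_def by simp
qed

lemma qm_pow: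
  assumes ga: "group_action Gr UNIV \<phi>"
    and qd: "\<forall>g \<in> carrier Gr. \<forall>a b. \<bar>rel_height H (\<phi> g a) (\<phi> g b) - rel_height H a b\<bar> \<le> d"
    and x: "x \<in> carrier Gr"
  shows "\<bar>rel_height H (\<phi> (x [^]\<^bsub>Gr\<^esub> m) a) a - int m * rel_height H (\<phi> x a) a\<bar> \<le> int m * d"
proof (induction m)
  case 0
  have "\<phi> \<one>\<^bsub>Gr\<^esub> = (\<lambda>x \<in> UNIV. x)" using group_action.id_eq_one[OF ga] by simp
  hence "\<phi> \<one>\<^bsub>Gr\<^esub> a = a" by simp
  then show ?case by (simp add: rel_height_def)
next
  case (Suc m)
  have grp: "group Gr" using ga unfolding group_action_def group_hom_def by blast
  then interpret group Gr .
  have "x [^]\<^bsub>Gr\<^esub> Suc m = x [^]\<^bsub>Gr\<^esub> m \<otimes>\<^bsub>Gr\<^esub> x" using x by simp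
  moreover have "\<bar>rel_height H (\<phi> (x [^]\<^bsub>Gr\<^esub> m \<otimes>\<^bsub>Gr\<^esub> x) a) a - rel_height H (\<phi> (x [^]\<^bsub>Gr\<^esub> m) a) a - rel_height H (\<phi> x a) a\<bar> \<le> d"
    using qm_step[OF ga qd x] x by simp
  ultimately show ?case using Suc.IH unfolding abs_le_iff by (simp add: algebra_simps)
qed

lemma tb_of_heights:
  assumes hso: "half_space_order leq H" and gh: "globally_hyperbolic leq"
    and b: "\<forall>z\<in>S. m \<le> height H z \<and> height H z \<le> M"
  shows "top_bounded S"
proof -
  have hsf: "half_space_filtration H" using hso unfolding half_space_order_def by blast
  obtain w where w: "\<forall>a b. rel_height H a b \<ge> w \<longrightarrow> leq b a" using hso unfolding half_space_order_def by blast
  obtain p where p: "height H p = m - \<bar>w\<bar>" using height_exists[OF hsf] by blast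
  obtain q where q: "height H q = M + \<bar>w\<bar>" using height_exists[OF hsf] by blast
  define K where "K = {z. leq p z \<and> leq z q}"
  have Kc: "compact K" using gh unfolding globally_hyperbolic_def K_def by blast
  have "K = {z. leq p z} \<inter> {z. leq z q}" unfolding K_def by blast
  hence Kcl: "closed K" using gh unfolding globally_hyperbolic_def by auto
  have "S \<subseteq> K"
  proof
    fix z assume z: "z \<in> S"
    have "rel_height H z p \<ge> w" using b z p unfolding rel_height_def by fastforce
    moreover have "rel_height H q z \<ge> w" using b z q unfolding rel_height_def by fastforce
    ultimately show "z \<in> K" using w unfolding K_def by blast
  qed
  hence "closure S \<subseteq> K" using Kcl by (rule closure_minimal)
  hence "closure S = K \<inter> closure S" by blast
  thus ?thesis unfolding top_bounded_def using Kc by (metis closed_closure compact_Int_closed)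
qed

lemma heights_of_tb:
  assumes hso: "half_space_order leq H" and gh: "globally_hyperbolic leq"
    and tb: "top_bounded S"
  shows "\<exists>m M. \<forall>z\<in>S. m \<le> height H z \<and> height H z \<le> M"
proof -
  have hsf: "half_space_filtration H" using hso unfolding half_space_order_def by blast
  have pos: "is_poset leq" using hso unfolding half_space_order_def by blast
  obtain w where w: "\<forall>a b. rel_height H a b \<ge> w \<longrightarrow> leq b a" using hso unfolding half_space_order_def by blast
  define W where "W = max w 1"
  have cs: "compact (closure S)" using tb unfolding top_bounded_def .
  have cover1: "closure S \<subseteq> (\<Union>p\<in>UNIV. - {z. leq p z})"
  proof
    fix z assume "z \<in> closure S"
    obtain p where p: "height H p = height H z + W" using height_exists[OF hsf] by blast
    have "\<not> leq p z"
    proof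
      assume l: "leq p z"
      have "rel_height H p z \<ge> w" using p unfolding rel_height_def W_def by simp
      hence "leq z p" using w by blast
      hence "p = z" using poset_antisym[OF pos l] by blast
      thus False using p unfolding W_def by simp
    qed
    thus "z \<in> (\<Union>p\<in>UNIV. - {z. leq p z})" by blast
  qed
  have op1: "open (- {z. leq p z})" for p using gh unfolding globally_hyperbolic_def by (simp add: open_Compl)
  obtain C1 where C1: "finite C1" "closure S \<subseteq> (\<Union>p\<in>C1. - {z. leq p z})"
    using compactE_image[OF cs _ cover1] op1 by metis
  have cover2: "closure S \<subseteq> (\<Union>p\<in>UNIV. - {z. leq z p})"
  proof
    fix z assume "z \<in> closure S"
    obtain p where p: "height H p = height H z - W" using height_exists[OF hsf] by blast
    have "\<not> leq z p"
    proof
      assume l: "leq z p"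
      have "rel_height H z p \<ge> w" using p unfolding rel_height_def W_def by simp
      hence "leq p z" using w by blast
      hence "p = z" using poset_antisym[OF pos l] by blast
      thus False using p unfolding W_def by simp
    qed
    thus "z \<in> (\<Union>p\<in>UNIV. - {z. leq z p})" by blast
  qed
  have op2: "open (- {z. leq z p})" for p using gh unfolding globally_hyperbolic_def by (simp add: open_Compl)
  obtain C2 where C2: "finite C2" "closure S \<subseteq> (\<Union>p\<in>C2. - {z. leq z p})"
    using compactE_image[OF cs _ cover2] op2 by metis
  define M where "M = Max (insert 0 (height H ` C1)) + w"
  define m where "m = Min (insert 0 (height H ` C2)) - w"
  have "\<forall>z\<in>S. m \<le> height H z \<and> height H z \<le> M"
  proof
    fix z assume zS: "z \<in> S"
    hence zc: "z \<in> closure S" by (meson closure_subset subsetD)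
    then obtain p where p: "p \<in> C1" "\<not> leq p z" using C1 by blast
    hence "\<not> rel_height H z p \<ge> w" using w by blast
    moreover have "height H p \<le> Max (insert 0 (height H ` C1))" using p C1 by simp
    ultimately have 1: "height H z \<le> M" unfolding M_def rel_height_def by linarith
    obtain q where q: "q \<in> C2" "\<not> leq z q" using C2 zc by blast
    hence "\<not> rel_height H q z \<ge> w" using w by blast
    moreover have "Min (insert 0 (height H ` C2)) \<le> height H q" using q C2 by simp
    ultimately have 2: "m \<le> height H z" unfolding m_def rel_height_def by linarith
    show "m \<le> height H z \<and> height H z \<le> M" using 1 2 by blast
  qed
  thus ?thesis by blast
qed


theorem theorem2p7:
  fixes leq :: "'x::topological_space \<Rightarrow> 'x \<Rightarrow> bool"
    and H :: "int \<Rightarrow> 'x set"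
    and Gr :: "('g, 'b) monoid_scheme"
    and \<phi> :: "'g \<Rightarrow> 'x \<Rightarrow> 'x"
    and G :: "'g set"
  assumes "half_space_order leq H"
    and "globally_hyperbolic leq"
    and "faithful_action Gr UNIV \<phi>"
    and "quasi_aut_action Gr \<phi> H"
    and "unbounded_action Gr \<phi> H"
    and "subgroup G Gr"
  shows "((\<forall>g \<in> G. translation_number Gr \<phi> H g = 0)
            \<longleftrightarrow> (\<forall>x. top_bounded {\<phi> g x | g. g \<in> G}))
       \<and> ((\<forall>x. top_bounded {\<phi> g x | g. g \<in> G})
            \<longleftrightarrow> (\<exists>x. top_bounded {\<phi> g x | g. g \<in> G}))"
proof -
  note hso = assms(1) and gh = assms(2)
  have ga: "group_action Gr UNIV \<phi>" using assms(3) unfolding faithful_action_def by blast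
  have grp: "group Gr" using ga unfolding group_action_def group_hom_def by blast
  interpret group Gr by (rule grp)
  obtain d where qd: "\<forall>g \<in> carrier Gr. \<forall>a b. \<bar>rel_height H (\<phi> g a) (\<phi> g b) - rel_height H a b\<bar> \<le> d"
    using assms(4) unfolding quasi_aut_action_def by blast
  have Gsub: "G \<subseteq> carrier Gr" using assms(6) by (rule subgroup.subset)
  have Gpow: "g [^]\<^bsub>Gr\<^esub> (n::nat) \<in> G" if "g \<in> G" for g n
  proof (induction n)
    case 0 show ?case using assms(6) by (simp add: subgroup.one_closed)
  next
    case (Suc n) thus ?case using assms(6) that Gsub by (simp add: subgroup.m_closed)
  qed
  define BH where "BH x \<longleftrightarrow> (\<exists>m M. \<forall>g\<in>G. m \<le> height H (\<phi> g x) \<and> height H (\<phi> g x) \<le> M)" for x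
  have TB: "top_bounded {\<phi> g x | g. g \<in> G} \<longleftrightarrow> BH x" for x
  proof
    assume "top_bounded {\<phi> g x | g. g \<in> G}"
    from heights_of_tb[OF hso gh this] show "BH x" unfolding BH_def by blast
  next
    assume "BH x"
    then obtain m M where "\<forall>g\<in>G. m \<le> height H (\<phi> g x) \<and> height H (\<phi> g x) \<le> M" unfolding BH_def by blast
    hence "\<forall>z\<in>{\<phi> g x | g. g \<in> G}. m \<le> height H z \<and> height H z \<le> M" by blast
    thus "top_bounded {\<phi> g x | g. g \<in> G}" by (rule tb_of_heights[OF hso gh])
  qed
  have TR: "BH y" if "BH x" for x y
  proof -
    obtain m M where mM: "\<forall>g\<in>G. m \<le> height H (\<phi> g x) \<and> height H (\<phi> g x) \<le> M" using \<open>BH x\<close> unfolding BH_def by blast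
    have "\<forall>g\<in>G. m + rel_height H y x - d \<le> height H (\<phi> g y) \<and> height H (\<phi> g y) \<le> M + rel_height H y x + d"
    proof
      fix g assume g: "g \<in> G"
      have "\<bar>rel_height H (\<phi> g y) (\<phi> g x) - rel_height H y x\<bar> \<le> d" using qd g Gsub by blast
      thus "m + rel_height H y x - d \<le> height H (\<phi> g y) \<and> height H (\<phi> g y) \<le> M + rel_height H y x + d"
        using mM g unfolding rel_height_def abs_le_iff by fastforce
    qed
    thus ?thesis unfolding BH_def by blast
  qed
  define a0 :: 'x where "a0 = (SOME a::'x. True)"
  define u where "u g n = real_of_int (rel_height H (\<phi> (g [^]\<^bsub>Gr\<^esub> (n::nat)) a0) a0)" for g n
  have Tdef: "translation_number Gr \<phi> H g = lim (\<lambda>n. u g n / real n)" for g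
    unfolding translation_number_def Let_def u_def a0_def by simp
  have QC: "convergent (\<lambda>n. u g n / real n) \<and> \<bar>lim (\<lambda>n. u g n / real n) - u g 1\<bar> \<le> d"
    if g: "g \<in> carrier Gr" for g
  proof (rule quasi_conv)
    fix n m :: nat
    have "\<bar>rel_height H (\<phi> ((g [^]\<^bsub>Gr\<^esub> n) [^]\<^bsub>Gr\<^esub> m) a0) a0 - int m * rel_height H (\<phi> (g [^]\<^bsub>Gr\<^esub> n) a0) a0\<bar> \<le> int m * d"
      using qm_pow[OF ga qd] g by simp
    hence "\<bar>rel_height H (\<phi> (g [^]\<^bsub>Gr\<^esub> (n*m)) a0) a0 - int m * rel_height H (\<phi> (g [^]\<^bsub>Gr\<^esub> n) a0) a0\<bar> \<le> int m * d"
      using g by (simp add: nat_pow_pow)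
    hence "real_of_int \<bar>rel_height H (\<phi> (g [^]\<^bsub>Gr\<^esub> (n*m)) a0) a0 - int m * rel_height H (\<phi> (g [^]\<^bsub>Gr\<^esub> n) a0) a0\<bar> \<le> real_of_int (int m * d)"
      by linarith
    thus "\<bar>u g (n*m) - real m * u g n\<bar> \<le> real m * real_of_int d" unfolding u_def by simp
  qed
  have T1: "BH a0" if T0: "\<forall>g \<in> G. translation_number Gr \<phi> H g = 0"
  proof -
    have "\<forall>g\<in>G. height H a0 - d \<le> height H (\<phi> g a0) \<and> height H (\<phi> g a0) \<le> height H a0 + d"
    proof
      fix g assume g: "g \<in> G"
      hence gc: "g \<in> carrier Gr" using Gsub by blast
      have "translation_number Gr \<phi> H g = 0" using T0 g by blast
      hence "lim (\<lambda>n. u g n / real n) = 0" unfolding Tdef .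
      hence "\<bar>0 - u g 1\<bar> \<le> d" using QC[OF gc] by simp
      moreover have "u g 1 = real_of_int (rel_height H (\<phi> g a0) a0)" unfolding u_def using gc by simp
      ultimately have "\<bar>rel_height H (\<phi> g a0) a0\<bar> \<le> d" by linarith
      thus "height H a0 - d \<le> height H (\<phi> g a0) \<and> height H (\<phi> g a0) \<le> height H a0 + d"
        unfolding rel_height_def abs_le_iff by linarith
    qed
    thus ?thesis unfolding BH_def by blast
  qed
  have T2: "\<forall>g \<in> G. translation_number Gr \<phi> H g = 0" if "BH a0"
  proof
    fix g assume g: "g \<in> G"
    obtain m M where mM: "\<forall>g\<in>G. m \<le> height H (\<phi> g a0) \<and> height H (\<phi> g a0) \<le> M" using \<open>BH a0\<close> unfolding BH_def by blast
    define B where "B = real_of_int (\<bar>M - height H a0\<bar> + \<bar>m - height H a0\<bar>)"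
    have ub: "\<bar>u g n\<bar> \<le> B" for n
    proof -
      have "m \<le> height H (\<phi> (g [^]\<^bsub>Gr\<^esub> n) a0) \<and> height H (\<phi> (g [^]\<^bsub>Gr\<^esub> n) a0) \<le> M"
        using mM Gpow[OF g] by blast
      thus ?thesis unfolding u_def B_def rel_height_def by linarith
    qed
    have "(\<lambda>n. u g n / real n) \<longlonglongrightarrow> 0"
    proof (rule tendsto_sandwich[of "\<lambda>n. - B / real n" _ _ "\<lambda>n. B / real n"])
      have l: "- B / real n \<le> u g n / real n" for n
        using ub[of n] by (intro divide_right_mono) (auto simp: abs_le_iff)
      have r: "u g n / real n \<le> B / real n" for n
        using ub[of n] by (intro divide_right_mono) (auto simp: abs_le_iff)
      show "\<forall>\<^sub>F n in sequentially. - B / real n \<le> u g n / real n" using l by simp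
      show "\<forall>\<^sub>F n in sequentially. u g n / real n \<le> B / real n" using r by simp
      show "(\<lambda>n. - B / real n) \<longlonglongrightarrow> 0" by (rule lim_const_over_n)
      show "(\<lambda>n. B / real n) \<longlonglongrightarrow> 0" by (rule lim_const_over_n)
    qed
    thus "translation_number Gr \<phi> H g = 0" unfolding Tdef by (rule limI)
  qed
  have A: "(\<forall>x. top_bounded {\<phi> g x | g. g \<in> G}) \<longleftrightarrow> (\<forall>x. BH x)" using TB by simp
  have B: "(\<exists>x. top_bounded {\<phi> g x | g. g \<in> G}) \<longleftrightarrow> (\<exists>x. BH x)" using TB by simp
  have C: "(\<forall>x. BH x) \<longleftrightarrow> BH a0" using TR by blast
  have D: "(\<exists>x. BH x) \<longleftrightarrow> BH a0" using TR by blast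
  have E: "(\<forall>g \<in> G. translation_number Gr \<phi> H g = 0) \<longleftrightarrow> BH a0" using T1 T2 by blast
  show ?thesis unfolding A B C D E by simp
qed

end
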